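(* Let $p(1,N):=\frac{1+a\varphi_N}{2+a\varphi_N}$. Then $$\max_{1\le k\le N}\ \max_{\tau_k(W)\le n<\tau_{k+1}(W)}\big(\log_N k-\log_N W(n)\big)\to0\quad\text{in }\mathbb P_1^{p(1,N),+}\text{-probability as }N\to\infty.$$
   Context: $a>0$ and $0<\varphi_N\le1$. Let $\mathbb W$ be the set of integer sequences $w=(w(0),w(1),\dots)$ with $w(n+1)-w(n)\in\{-1,1\}$. For $p\in(0,1)$ and $k\in\mathbb Z$, $\mathbb P_k^p$ is the law on $\mathbb W$ of the simple random walk $W$ with $W(0)=k$ that steps $+1$ with probability $p$ and $-1$ with probability $1-p$. For $k\in\mathbb N_0$, $\tau_k(w):=\min\{n\in\mathbb N_0: w(n)=k\}$ and $\tau_k^+(w):=\min\{n\in\mathbb N: w(n)=k\}$. For $p>1/2$ and $\ell\in\mathbb N_0$, $\mathbb P_\ell^{p,+}$ denotes $\mathbb P_\ell^p$ conditioned on the event $\{\tau_0^+(W)=\infty\}$. $\log_N x=\log x/\log N$. *)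

theory Defs
  imports "HOL-Probability.Probability"
begin

definition walk_of :: "int \<Rightarrow> bool stream \<Rightarrow> nat \<Rightarrow> int" where
  "walk_of k s n = k + (\<Sum>i<n. if s !! i then 1 else -1)"

definition walk_law :: "real \<Rightarrow> int \<Rightarrow> (nat \<Rightarrow> int) measure" where
  "walk_law p k = distr (stream_space (measure_pmf (bernoulli_pmf p)))
      (PiM UNIV (\<lambda>_::nat. count_space (UNIV::int set))) (walk_of k)"

definition never_returns0 :: "(nat \<Rightarrow> int) set" where
  "never_returns0 = {w. \<forall>n\<ge>1. w n \<noteq> 0}"

definition cond_walk_prob :: "real \<Rightarrow> int \<Rightarrow> (nat \<Rightarrow> int) set \<Rightarrow> real" where
  "cond_walk_prob p l A =
     measure (walk_law p l) (A \<inter> never_returns0) / measure (walk_law p l) never_returns0"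

definition tau :: "nat \<Rightarrow> (nat \<Rightarrow> int) \<Rightarrow> enat" where
  "tau k w = (if \<exists>n. w n = int k then enat (LEAST n. w n = int k) else \<infinity>)"

definition max_dev :: "nat \<Rightarrow> (nat \<Rightarrow> int) \<Rightarrow> real" where
  "max_dev N w = Max ((\<lambda>k. Max ((\<lambda>n. log (real N) (real k) - log (real N) (real_of_int (w n)))
        ` {n. tau k w \<le> enat n \<and> enat n < tau (Suc k) w})) ` {1..N})"

end

theory Submission
  imports Defs "HOL-Probability.Hoeffding" "HOL-Real_Asymp.Real_Asymp"
begin


definition st :: "bool \<Rightarrow> int" where "st b = (if b then 1 else -1)"

lemma walk_of_0[simp]: "walk_of k s 0 = k"
  by (simp add: walk_of_def)

lemma walk_of_Suc: "walk_of k s (Suc n) = walk_of (k + st (shd s)) (stl s) n"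
  unfolding walk_of_def st_def
  by (simp add: sum.lessThan_Suc_shift del: sum.lessThan_Suc)

lemma walk_of_Suc2: "walk_of k s (Suc n) = walk_of k s n + st (s !! n)"
  unfolding walk_of_def st_def by simp

lemma walk_of_Stream: "walk_of k (b ## s) (Suc n) = walk_of (k + st b) s n"
  by (simp add: walk_of_Suc)

lemma st_cases: "st b = 1 \<or> st b = -1" by (simp add: st_def)

lemma snth_fun_meas: "(\<lambda>s. f (s !! n)) \<in> measurable (stream_space (measure_pmf P)) (count_space UNIV)"
  by (rule measurable_compose[OF measurable_snth]) simp

lemma walk_meas[measurable]: "(\<lambda>s. walk_of k s n) \<in> measurable (stream_space (measure_pmf P)) (count_space UNIV)"
proof (induction n)
  case 0 then show ?case by simp
next
  case (Suc n)
  have e: "(\<lambda>s. walk_of k s (Suc n)) = (\<lambda>s. (\<lambda>i s. i + st (s !! n)) (walk_of k s n) s)"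
    by (simp add: walk_of_Suc2)
  have m: "(\<lambda>s. i + st (s !! n)) \<in> measurable (stream_space (measure_pmf P)) (count_space UNIV)" for i
  proof -
    have "(\<lambda>s. i + st (s !! n)) = (\<lambda>s. if s !! n then i + 1 else i - 1)" by (auto simp: st_def)
    moreover have "(\<lambda>s. if s !! n then i + 1 else i - 1) \<in> measurable (stream_space (measure_pmf P)) (count_space UNIV)"
      by (rule snth_fun_meas)
    ultimately show ?thesis by simp
  qed
  show ?case unfolding e
    by (rule measurable_compose_countable[OF m Suc])
qed

function hitseq :: "nat \<Rightarrow> int \<Rightarrow> int list \<Rightarrow> bool stream \<Rightarrow> bool" where
  "hitseq n x [] s = True"
| "hitseq n x (t # ts) s = (if x = t then hitseq n x ts s else
     (case n of 0 \<Rightarrow> False | Suc m \<Rightarrow> x \<noteq> 0 \<and> hitseq m (x + st (shd s)) (t # ts) (stl s)))"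
  by pat_completeness auto
termination
  by (relation "measures [\<lambda>(n,_,_,_). n, \<lambda>(_,_,ts,_). length ts]") auto

lemma hitseq_meas[measurable]: "Measurable.pred (stream_space (measure_pmf P)) (hitseq n x ts)"
proof (induction ts arbitrary: n x)
  case Nil
  then show ?case by simp
next
  case (Cons t ts)
  show ?case
  proof (induction n arbitrary: x)
    case 0
    then show ?case using Cons by (cases "x = t") simp_all
  next
    case (Suc m)
    show ?case
    proof (cases "x = t")
      case True
      then show ?thesis using Cons by simp
    next
      case False
      have e: "hitseq (Suc m) x (t # ts) = (\<lambda>s. x \<noteq> 0 \<and> (if shd s then hitseq m (x + 1) (t # ts) (stl s) else hitseq m (x - 1) (t # ts) (stl s)))"
      proof (rule ext)
        fix s
        show "hitseq (Suc m) x (t # ts) s = (x \<noteq> 0 \<and> (if shd s then hitseq m (x + 1) (t # ts) (stl s) else hitseq m (x - 1) (t # ts) (stl s)))"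
          by (subst hitseq.simps) (cases "shd s", simp_all add: False st_def del: hitseq.simps)
      qed
      have m1: "Measurable.pred (stream_space (measure_pmf P)) (hitseq m y (t # ts))" for y
        by (rule Suc.IH)
      have m2: "Measurable.pred (stream_space (measure_pmf P)) (\<lambda>s. shd s)"
        using snth_fun_meas[of "\<lambda>b. b" 0 P] by simp
      show ?thesis unfolding e using m1 m2 by measurable
    qed
  qed
qed

abbreviation SS :: "real \<Rightarrow> bool stream measure" where
  "SS p \<equiv> stream_space (measure_pmf (bernoulli_pmf p))"

lemma space_SS[simp]: "space (SS p) = UNIV"
  by (simp add: space_stream_space)

lemma prob_SS: "prob_space (SS p)"
  by (rule prob_space.prob_space_stream_space) (rule prob_space_measure_pmf)

lemma nn_step:
  assumes "0 \<le> p" "p \<le> 1" "f \<in> borel_measurable (SS p)"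
  shows "(\<integral>\<^sup>+s. f s \<partial>SS p) = (\<integral>\<^sup>+s. f (True ## s) \<partial>SS p) * p + (\<integral>\<^sup>+s. f (False ## s) \<partial>SS p) * (1 - p)"
  using assms
  by (subst prob_space.nn_integral_stream_space[OF prob_space_measure_pmf]) simp_all

lemma emeasure_step:
  assumes "0 \<le> p" "p \<le> 1" "Measurable.pred (SS p) P"
  shows "emeasure (SS p) {s. P s} = emeasure (SS p) {s. P (True ## s)} * p + emeasure (SS p) {s. P (False ## s)} * (1 - p)"
proof -
  have m1: "Measurable.pred (SS p) (\<lambda>s. P (b ## s))" for b
    using assms(3) by measurable
  have sets: "{s. Q s} \<in> sets (SS p)" if "Measurable.pred (SS p) Q" for Q
  proof -
    have "{s \<in> space (SS p). Q s} \<in> sets (SS p)" using that by measurable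
    then show ?thesis by simp
  qed
  have "emeasure (SS p) {s. P s} = (\<integral>\<^sup>+s. indicator {s. P s} s \<partial>SS p)"
    using sets[OF assms(3)] by (simp add: nn_integral_indicator)
  also have "\<dots> = (\<integral>\<^sup>+s. indicator {s. P s} (True ## s) \<partial>SS p) * p + (\<integral>\<^sup>+s. indicator {s. P s} (False ## s) \<partial>SS p) * (1 - p)"
    using assms by (intro nn_step) auto
  also have "\<dots> = emeasure (SS p) {s. P (True ## s)} * p + emeasure (SS p) {s. P (False ## s)} * (1 - p)"
    using sets[OF m1[of True]] sets[OF m1[of False]]
    by (simp add: nn_integral_indicator[symmetric] indicator_def)
  finally show ?thesis .
qed

definition rr :: "real \<Rightarrow> real" where "rr p = (1 - p) / p"
definition hh :: "real \<Rightarrow> real \<Rightarrow> real" where "hh p x = 1 - rr p powr x"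
definition uu :: "real \<Rightarrow> int \<Rightarrow> int \<Rightarrow> real" where
  "uu p t x = (if x = t then 1 else if x < t then hh p (real_of_int x) / hh p (real_of_int t)
     else rr p powr (real_of_int (x - t)))"

lemma rr_pos: "1/2 < p \<Longrightarrow> p < 1 \<Longrightarrow> 0 < rr p \<and> rr p < 1"
  by (auto simp: rr_def field_simps)

lemma powr_harm:
  assumes "1/2 < p" "p < 1"
  shows "p * rr p powr (y + 1) + (1 - p) * rr p powr (y - 1) = rr p powr y"
proof -
  have r: "0 < rr p" using rr_pos[OF assms] by simp
  have "rr p powr (y + 1) = rr p powr y * rr p" using r by (simp add: powr_add)
  moreover have "rr p powr (y - 1) = rr p powr y / rr p" using r by (simp add: powr_diff)
  ultimately show ?thesis using assms r by (simp add: rr_def field_simps)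
qed

lemma hh_harm:
  assumes "1/2 < p" "p < 1"
  shows "p * hh p (y + 1) + (1 - p) * hh p (y - 1) = hh p y"
  using powr_harm[OF assms, of y] by (simp add: hh_def algebra_simps)

lemma powr_lt1: "0 < (r::real) \<Longrightarrow> r < 1 \<Longrightarrow> 0 < y \<Longrightarrow> r powr y < 1"
proof -
  assume a: "0 < r" "r < 1" "0 < y"
  then have "ln r < 0" using ln_less_zero by blast
  then have "y * ln r < 0" using a by (simp add: mult_pos_neg)
  then show ?thesis using a by (simp add: powr_def)
qed

lemma hh_pos: "1/2 < p \<Longrightarrow> p < 1 \<Longrightarrow> 0 < y \<Longrightarrow> 0 < hh p y"
  using rr_pos[of p] powr_lt1[of "rr p" y] by (simp add: hh_def)

lemma hh_0[simp]: "1/2 < p \<Longrightarrow> p < 1 \<Longrightarrow> hh p 0 = 0"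
  using rr_pos[of p] by (simp add: hh_def)

lemma uu_nonneg: "1/2 < p \<Longrightarrow> p < 1 \<Longrightarrow> 0 \<le> x \<Longrightarrow> 0 \<le> uu p t x"
  using hh_pos[of p] by (auto simp: uu_def order.order_iff_strict intro!: divide_nonneg_nonneg)

lemma uu_harm:
  assumes "1/2 < p" "p < 1" "0 \<le> t" "1 \<le> x" "x \<noteq> t"
  shows "p * uu p t (x + 1) + (1 - p) * uu p t (x - 1) = uu p t x"
proof (cases "x < t")
  case True
  have ht: "0 < hh p (real_of_int t)" using hh_pos[OF assms(1,2)] True assms by simp
  have a: "uu p t (x + 1) = hh p (real_of_int x + 1) / hh p (real_of_int t)"
    using True ht by (auto simp: uu_def)
  have b: "uu p t (x - 1) = hh p (real_of_int x - 1) / hh p (real_of_int t)"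
    using True by (auto simp: uu_def)
  have c: "uu p t x = hh p (real_of_int x) / hh p (real_of_int t)"
    using True by (auto simp: uu_def)
  show ?thesis unfolding a b c using hh_harm[OF assms(1,2), of "real_of_int x"] ht
    by (simp add: field_simps)
next
  case False
  then have xt: "x > t" using assms by simp
  have r: "0 < rr p" using rr_pos[OF assms(1,2)] by simp
  have a: "uu p t (x + 1) = rr p powr (real_of_int (x - t) + 1)"
    using xt by (auto simp: uu_def intro!: arg_cong[where f="\<lambda>z. rr p powr z"])
  have b: "uu p t (x - 1) = rr p powr (real_of_int (x - t) - 1)"
    using xt r by (auto simp: uu_def intro!: arg_cong[where f="\<lambda>z. rr p powr z"])
  have c: "uu p t x = rr p powr (real_of_int (x - t))"
    using xt by (auto simp: uu_def)
  show ?thesis unfolding a b c by (rule powr_harm[OF assms(1,2)])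
qed

lemma hit_bound:
  assumes p: "1/2 < p" "p < 1" and t: "0 \<le> t" and c: "0 \<le> c"
    and base: "\<And>n. emeasure (SS p) {s. hitseq n t ts s} \<le> ennreal c"
  shows "0 \<le> x \<Longrightarrow> emeasure (SS p) {s. hitseq n x (t # ts) s} \<le> ennreal (uu p t x * c)"
proof (induction n arbitrary: x)
  case 0
  show ?case
  proof (cases "x = t")
    case True
    then show ?thesis using base[of 0] by (simp add: uu_def)
  next
    case False
    then show ?thesis by simp
  qed
next
  case (Suc m)
  show ?case
  proof (cases "x = t")
    case True
    then show ?thesis using base[of "Suc m"] by (simp add: uu_def)
  next
    case False
    show ?thesis
    proof (cases "x = 0")
      case True
      then show ?thesis using False by simp
    next
      case x0: False
      have x1: "1 \<le> x" using x0 Suc.prems by simp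
      have eT: "hitseq (Suc m) x (t # ts) (True ## s) = hitseq m (x + 1) (t # ts) s" for s
        using False x0 by (simp add: st_def)
      have eF: "hitseq (Suc m) x (t # ts) (False ## s) = hitseq m (x - 1) (t # ts) s" for s
        using False x0 by (simp add: st_def)
      have "emeasure (SS p) {s. hitseq (Suc m) x (t # ts) s}
          = emeasure (SS p) {s. hitseq m (x + 1) (t # ts) s} * p + emeasure (SS p) {s. hitseq m (x - 1) (t # ts) s} * (1 - p)"
      proof -
        have "emeasure (SS p) {s. hitseq (Suc m) x (t # ts) s} = emeasure (SS p) {s. hitseq (Suc m) x (t # ts) (True ## s)} * p + emeasure (SS p) {s. hitseq (Suc m) x (t # ts) (False ## s)} * (1 - p)"
          by (rule emeasure_step) (use p in auto)
        then show ?thesis by (simp only: eT eF)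
      qed
      also have "\<dots> \<le> ennreal (uu p t (x + 1) * c) * p + ennreal (uu p t (x - 1) * c) * (1 - p)"
        using Suc.IH[of "x + 1"] Suc.IH[of "x - 1"] x1
        by (intro add_mono mult_right_mono) auto
      also have "\<dots> = ennreal ((p * uu p t (x + 1) + (1 - p) * uu p t (x - 1)) * c)"
      proof -
        have A: "0 \<le> uu p t (x + 1) * c" "0 \<le> uu p t (x - 1) * c"
          using c x1 uu_nonneg[OF p, of "x+1" t] uu_nonneg[OF p, of "x-1" t] by auto
        have "ennreal (uu p t (x + 1) * c) * ennreal p = ennreal (uu p t (x + 1) * c * p)"
          using A p by (simp add: ennreal_mult)
        moreover have "ennreal (uu p t (x - 1) * c) * ennreal (1 - p) = ennreal (uu p t (x - 1) * c * (1 - p))"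
          using A p by (simp add: ennreal_mult)
        moreover have "ennreal (uu p t (x + 1) * c * p) + ennreal (uu p t (x - 1) * c * (1 - p))
            = ennreal (uu p t (x + 1) * c * p + uu p t (x - 1) * c * (1 - p))"
          using A p by (intro ennreal_plus[symmetric]) auto
        ultimately show ?thesis by (simp add: algebra_simps)
      qed
      also have "\<dots> = ennreal (uu p t x * c)"
        using uu_harm[OF p t x1 False] by simp
      finally show ?thesis .
    qed
  qed
qed

definition stayset :: "int \<Rightarrow> nat \<Rightarrow> int \<Rightarrow> bool stream set" where
  "stayset L m x = {s. \<forall>i\<le>m. 0 < walk_of x s i \<and> walk_of x s i < L}"

lemma stayset_meas: "stayset L m x \<in> sets (SS p)"
proof -
  have "{s \<in> space (SS p). \<forall>i\<le>m. 0 < walk_of x s i \<and> walk_of x s i < L} \<in> sets (SS p)"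
    by measurable
  then show ?thesis by (simp add: stayset_def)
qed

lemma stayset_Suc: "(b ## s \<in> stayset L (Suc m) x) = (0 < x \<and> x < L \<and> s \<in> stayset L m (x + st b))"
proof -
  have "(\<forall>i\<le>Suc m. Q i) = (Q 0 \<and> (\<forall>i\<le>m. Q (Suc i)))" for Q :: "nat \<Rightarrow> bool"
  proof (intro iffI conjI allI impI)
    fix i assume "\<forall>i\<le>Suc m. Q i" "i \<le> m" then show "Q (Suc i)" by simp
  next
    assume "\<forall>i\<le>Suc m. Q i" then show "Q 0" by simp
  next
    fix i assume a: "Q 0 \<and> (\<forall>i\<le>m. Q (Suc i))" "i \<le> Suc m"
    then show "Q i" by (cases i) auto
  qed
  then show ?thesis by (simp add: stayset_def walk_of_Stream)
qed

lemma one_le_powr_neg: "0 < (r::real) \<Longrightarrow> r < 1 \<Longrightarrow> y \<le> 0 \<Longrightarrow> 1 \<le> r powr y"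
proof -
  assume a: "0 < r" "r < 1" "y \<le> 0"
  then have "ln r < 0" using ln_less_zero by blast
  then have "0 \<le> y * ln r" using a by (simp add: mult_nonpos_nonpos)
  then show ?thesis using a by (simp add: powr_def)
qed

definition sg :: "real \<Rightarrow> real" where "sg p = sqrt (rr p)"
definition rho :: "real \<Rightarrow> real" where "rho p = 2 * sqrt (p * (1 - p))"

lemma sg_harm:
  assumes "1/2 < p" "p < 1"
  shows "p * sg p powr (y + 1) + (1 - p) * sg p powr (y - 1) = sg p powr y * rho p"
proof -
  have r: "0 < rr p" using rr_pos[OF assms] by simp
  then have s: "0 < sg p" by (simp add: sg_def)
  have P1: "sg p powr (y + 1) = sg p powr y * sg p" using s by (simp add: powr_add)
  have P2: "sg p powr (y - 1) = sg p powr y / sg p" using s by (simp add: powr_diff)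
  have sp: "sqrt p * sqrt p = p" "sqrt (1-p) * sqrt (1-p) = 1 - p" "0 < sqrt p" "0 < sqrt (1-p)"
    using assms by auto
  have sgd: "sg p = sqrt (1-p) / sqrt p" by (simp add: sg_def rr_def real_sqrt_divide)
  have "p * sg p = sqrt p * sqrt (1-p)" unfolding sgd using sp
    by (metis nonzero_mult_div_cancel_left less_irrefl times_divide_eq_right mult.commute)
  moreover have "(1 - p) / sg p = sqrt p * sqrt (1-p)" unfolding sgd using sp
    by (simp add: field_simps)
  ultimately have "p * sg p = sqrt (p * (1 - p))" "(1 - p) / sg p = sqrt (p * (1 - p))"
    by (simp_all add: real_sqrt_mult)
  then show ?thesis using s unfolding P1 P2 rho_def
    by (metis (no_types, lifting) distrib_left mult.assoc mult.commute mult_2 times_divide_eq_right)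
qed

lemma sg_pos: "1/2 < p \<Longrightarrow> p < 1 \<Longrightarrow> 0 < sg p \<and> sg p < 1"
  using rr_pos[of p] by (simp add: sg_def)

lemma rho_nonneg: "1/2 < p \<Longrightarrow> p < 1 \<Longrightarrow> 0 \<le> rho p"
  by (simp add: rho_def)

lemma stay_bound:
  assumes p: "1/2 < p" "p < 1"
  shows "emeasure (SS p) (stayset L m x) \<le> ennreal (sg p powr (real_of_int (x - L)) * rho p ^ m)"
proof (induction m arbitrary: x)
  case 0
  show ?case
  proof (cases "0 < x \<and> x < L")
    case True
    have "emeasure (SS p) (stayset L 0 x) \<le> 1"
      using prob_space.emeasure_le_1[OF prob_SS] by blast
    also have "1 \<le> ennreal (sg p powr (real_of_int (x - L)) * rho p ^ 0)"
      using one_le_powr_neg[of "sg p" "real_of_int (x - L)"] sg_pos[OF p] True by simp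
    finally show ?thesis .
  next
    case False
    then have "stayset L 0 x = {}" by (auto simp: stayset_def)
    then show ?thesis by simp
  qed
next
  case (Suc m)
  show ?case
  proof (cases "0 < x \<and> x < L")
    case False
    then have "stayset L (Suc m) x = {}" by (auto simp: stayset_def)
    then show ?thesis by simp
  next
    case True
    have mp: "Measurable.pred (SS p) (\<lambda>s. s \<in> stayset L (Suc m) x)"
      using stayset_meas[of L "Suc m" x p] by simp
    have "emeasure (SS p) (stayset L (Suc m) x) = emeasure (SS p) {s. s \<in> stayset L (Suc m) x}" by simp
    also have "\<dots> = emeasure (SS p) {s. True ## s \<in> stayset L (Suc m) x} * p + emeasure (SS p) {s. False ## s \<in> stayset L (Suc m) x} * (1 - p)"
      by (rule emeasure_step) (use p mp in auto)
    also have "\<dots> = emeasure (SS p) (stayset L m (x + 1)) * p + emeasure (SS p) (stayset L m (x - 1)) * (1 - p)"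
      using True by (simp add: stayset_Suc st_def)
    also have "\<dots> \<le> ennreal (sg p powr (real_of_int (x + 1 - L)) * rho p ^ m) * p + ennreal (sg p powr (real_of_int (x - 1 - L)) * rho p ^ m) * (1 - p)"
      by (intro add_mono mult_right_mono Suc.IH) auto
    also have "\<dots> = ennreal ((p * sg p powr (real_of_int (x - L) + 1) + (1 - p) * sg p powr (real_of_int (x - L) - 1)) * rho p ^ m)"
    proof -
      have A: "0 \<le> sg p powr (real_of_int (x + 1 - L)) * rho p ^ m" "0 \<le> sg p powr (real_of_int (x - 1 - L)) * rho p ^ m"
        using rho_nonneg[OF p] by auto
      have e1: "real_of_int (x + 1 - L) = real_of_int (x - L) + 1" "real_of_int (x - 1 - L) = real_of_int (x - L) - 1" by simp_all
      have "ennreal (sg p powr (real_of_int (x + 1 - L)) * rho p ^ m) * ennreal p = ennreal (sg p powr (real_of_int (x + 1 - L)) * rho p ^ m * p)"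
        using A p by (simp add: ennreal_mult)
      moreover have "ennreal (sg p powr (real_of_int (x - 1 - L)) * rho p ^ m) * ennreal (1 - p) = ennreal (sg p powr (real_of_int (x - 1 - L)) * rho p ^ m * (1 - p))"
        using A p by (simp add: ennreal_mult)
      moreover have "ennreal (sg p powr (real_of_int (x + 1 - L)) * rho p ^ m * p) + ennreal (sg p powr (real_of_int (x - 1 - L)) * rho p ^ m * (1 - p))
          = ennreal (sg p powr (real_of_int (x + 1 - L)) * rho p ^ m * p + sg p powr (real_of_int (x - 1 - L)) * rho p ^ m * (1 - p))"
        using A p by (intro ennreal_plus[symmetric]) auto
      ultimately show ?thesis unfolding e1 by (simp add: algebra_simps)
    qed
    also have "\<dots> = ennreal (sg p powr (real_of_int (x - L)) * rho p ^ Suc m)"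
      using sg_harm[OF p, of "real_of_int (x - L)"] by (simp add: algebra_simps)
    finally show ?thesis .
  qed
qed

lemma hitseq_complete:
  "list_all2 (\<lambda>m t. m \<le> n \<and> walk_of x s m = t) ns ts \<Longrightarrow> sorted ns \<Longrightarrow>
   (\<forall>i. (\<exists>m\<in>set ns. i < m) \<longrightarrow> walk_of x s i \<noteq> 0) \<Longrightarrow> hitseq n x ts s"
proof (induction ts arbitrary: n x s ns)
  case Nil
  then show ?case by simp
next
  case (Cons t ts)
  from Cons.prems(1) obtain m ns' where ns: "ns = m # ns'" by (cases ns) auto
  show ?case using Cons.prems unfolding ns
  proof (induction n arbitrary: x s m ns')
    case 0
    then have "m = 0" "x = t" by auto
    moreover have "hitseq 0 x ts s"
      using 0 by (intro Cons.IH[of _ _ _ ns']) auto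
    ultimately show ?case by simp
  next
    case (Suc n)
    show ?case
    proof (cases "x = t")
      case True
      have "hitseq (Suc n) x ts s"
        using Suc.prems by (intro Cons.IH[of _ _ _ ns']) auto
      then show ?thesis using True by simp
    next
      case False
      have m0: "0 < m" using Suc.prems(1) False by (cases m) auto
      have x0: "x \<noteq> 0" using Suc.prems(3) m0 by fastforce
      have ge: "\<forall>k\<in>set ns'. m \<le> k" using Suc.prems(2) by simp
      define x' where "x' = x + st (shd s)"
      have wk: "walk_of x s k = walk_of x' (stl s) (k - 1)" if "0 < k" for k
        using that walk_of_Suc[of x s "k - 1"] by (simp add: x'_def)
      have "hitseq n x' (t # ts) (stl s)"
      proof (rule Suc.IH)
        show "list_all2 (\<lambda>m t. m \<le> n \<and> walk_of x' (stl s) m = t) ((m - 1) # map (\<lambda>k. k - 1) ns') (t # ts)"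
        proof -
          have l: "list_all2 (\<lambda>m t. m \<le> Suc n \<and> walk_of x s m = t) ns' ts" using Suc.prems(1) by simp
          have "list_all2 (\<lambda>k t. k - 1 \<le> n \<and> walk_of x' (stl s) (k - 1) = t) ns' ts"
            using l
          proof (rule list.rel_mono_strong)
            fix k t' assume "k \<in> set ns'" "k \<le> Suc n \<and> walk_of x s k = t'"
            then show "k - 1 \<le> n \<and> walk_of x' (stl s) (k - 1) = t'" using ge m0 wk[of k] by auto
          qed
          moreover have "m - 1 \<le> n" "walk_of x' (stl s) (m - 1) = t"
            using Suc.prems(1) m0 wk[of m] by auto
          ultimately show ?thesis by (simp add: list_all2_map1)
        qed
        show "sorted ((m - 1) # map (\<lambda>k. k - 1) ns')"
        proof -
          have s1: "sorted ns'" "\<forall>k\<in>set ns'. m \<le> k" using Suc.prems(2) by simp_all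
          have "sorted (map (\<lambda>k. k - 1) ns')" unfolding sorted_map
            using s1(1) by (rule sorted_wrt_mono_rel[rotated]) (simp add: diff_le_mono)
          moreover have "\<forall>y\<in>set (map (\<lambda>k. k - 1) ns'). m - 1 \<le> y" using s1(2) by (simp add: diff_le_mono)
          ultimately show ?thesis by simp
        qed
        show "\<forall>i. (\<exists>k\<in>set ((m - 1) # map (\<lambda>k. k - 1) ns'). i < k) \<longrightarrow> walk_of x' (stl s) i \<noteq> 0"
        proof (intro allI impI)
          fix i assume "\<exists>k\<in>set ((m - 1) # map (\<lambda>k. k - 1) ns'). i < k"
          then have "\<exists>k\<in>set (m # ns'). Suc i < k" by auto
          then have "walk_of x s (Suc i) \<noteq> 0" using Suc.prems(3) by blast
          then show "walk_of x' (stl s) i \<noteq> 0" using wk[of "Suc i"] by simp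
        qed
      qed
      then show ?thesis using False x0 by (simp add: x'_def)
    qed
  qed
qed

lemma hitseq_mono: "hitseq n x ts s \<Longrightarrow> hitseq (Suc n) x ts s"
proof (induction ts arbitrary: n x s)
  case Nil
  then show ?case by simp
next
  case (Cons t ts)
  show ?case using Cons.prems
  proof (induction n arbitrary: x s)
    case 0
    then show ?case using Cons.IH by (cases "x = t") auto
  next
    case (Suc m)
    show ?case
    proof (cases "x = t")
      case True
      then show ?thesis using Suc.prems Cons.IH by simp
    next
      case False
      have eq: "hitseq (Suc m) x (t # ts) s = (x \<noteq> 0 \<and> hitseq m (x + st (shd s)) (t # ts) (stl s))"
        using False by (subst hitseq.simps) (simp del: hitseq.simps)
      have "x \<noteq> 0 \<and> hitseq m (x + st (shd s)) (t # ts) (stl s)"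
        using Suc.prems eq by blast
      then have "x \<noteq> 0 \<and> hitseq (Suc m) (x + st (shd s)) (t # ts) (stl s)"
        using Suc.IH by blast
      then show ?thesis using False by (subst hitseq.simps) (simp del: hitseq.simps)
    qed
  qed
qed

lemma hitseq_sets: "{s. hitseq n x ts s} \<in> sets (SS p)"
proof -
  have "{s \<in> space (SS p). hitseq n x ts s} \<in> sets (SS p)" by measurable
  then show ?thesis by simp
qed

lemma hitseq_UN_bound:
  assumes "\<And>n. emeasure (SS p) {s. hitseq n x ts s} \<le> ennreal c"
  shows "emeasure (SS p) (\<Union>n. {s. hitseq n x ts s}) \<le> ennreal c"
proof -
  have inc: "incseq (\<lambda>n. {s. hitseq n x ts s})"
    by (rule incseq_SucI) (auto intro: hitseq_mono)
  have "emeasure (SS p) (\<Union>n. {s. hitseq n x ts s}) = (SUP n. emeasure (SS p) {s. hitseq n x ts s})"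
    using hitseq_sets inc by (intro SUP_emeasure_incseq[symmetric]) auto
  also have "\<dots> \<le> ennreal c" using assms by (rule SUP_least)
  finally show ?thesis .
qed

lemma hit_nil: "emeasure (SS p) {s. hitseq n x [] s} \<le> ennreal 1"
  using prob_space.emeasure_le_1[OF prob_SS] by simp

lemma walk_meas_PiM: "walk_of k \<in> measurable (SS p) (PiM UNIV (\<lambda>_::nat. count_space (UNIV::int set)))"
proof -
  have "(\<lambda>s i. walk_of k s i) \<in> measurable (SS p) (PiM UNIV (\<lambda>_::nat. count_space (UNIV::int set)))"
    by (rule measurable_PiM_single') auto
  then show ?thesis by simp
qed

lemma walk_law_le:
  assumes "walk_of k -` A \<subseteq> C" "C \<in> sets (SS p)"
  shows "measure (walk_law p k) A \<le> measure (SS p) C"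
proof (cases "A \<in> sets (PiM UNIV (\<lambda>_::nat. count_space (UNIV::int set)))")
  case True
  have "measure (walk_law p k) A = measure (SS p) (walk_of k -` A)"
    unfolding walk_law_def using True walk_meas_PiM by (subst measure_distr) auto
  also have "\<dots> \<le> measure (SS p) C"
  proof -
    interpret prob_space "SS p" by (rule prob_SS)
    show ?thesis using assms by (intro finite_measure_mono) auto
  qed
  finally show ?thesis .
next
  case False
  then have "measure (walk_law p k) A = 0" unfolding walk_law_def by (simp add: measure_notin_sets)
  then show ?thesis by simp
qed

lemma never_sets: "never_returns0 \<in> sets (PiM UNIV (\<lambda>_::nat. count_space (UNIV::int set)))"
proof -
  have "{w \<in> space (PiM UNIV (\<lambda>_::nat. count_space (UNIV::int set))). \<forall>n. 1 \<le> n \<longrightarrow> w n \<noteq> 0} \<in> sets (PiM UNIV (\<lambda>_::nat. count_space (UNIV::int set)))"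
    by measurable
  then show ?thesis by (simp add: never_returns0_def space_PiM)
qed

lemma walk_law_never:
  "measure (walk_law p k) never_returns0 = measure (SS p) {s. \<forall>n\<ge>1. walk_of k s n \<noteq> 0}"
  unfolding walk_law_def using never_sets walk_meas_PiM
  by (subst measure_distr) (auto simp: never_returns0_def)

lemma walk_step: "walk_of x s (Suc n) = walk_of x s n + 1 \<or> walk_of x s (Suc n) = walk_of x s n - 1"
  by (simp add: walk_of_Suc2 st_def)

lemma ivt_up:
  "a \<le> b \<Longrightarrow> walk_of x s a \<le> c \<Longrightarrow> c \<le> walk_of x s b \<Longrightarrow> \<exists>m. a \<le> m \<and> m \<le> b \<and> walk_of x s m = c"
proof (induction b)
  case 0
  then show ?case by auto
next
  case (Suc b)
  show ?case
  proof (cases "a = Suc b")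
    case True
    then show ?thesis using Suc.prems by auto
  next
    case False
    then have ab: "a \<le> b" using Suc.prems by simp
    show ?thesis
    proof (cases "c \<le> walk_of x s b")
      case True
      then show ?thesis using Suc.IH[OF ab Suc.prems(2)] by auto
    next
      case False
      then have "c = walk_of x s (Suc b)" using walk_step[of x s b] Suc.prems(3) by auto
      then show ?thesis using Suc.prems by auto
    qed
  qed
qed

lemma ivt_down:
  "a \<le> b \<Longrightarrow> c \<le> walk_of x s a \<Longrightarrow> walk_of x s b \<le> c \<Longrightarrow> \<exists>m. a \<le> m \<and> m \<le> b \<and> walk_of x s m = c"
proof (induction b)
  case 0
  then show ?case by auto
next
  case (Suc b)
  show ?case
  proof (cases "a = Suc b")
    case True
    then show ?thesis using Suc.prems by auto
  next
    case False
    then have ab: "a \<le> b" using Suc.prems by simp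
    show ?thesis
    proof (cases "walk_of x s b \<le> c")
      case True
      then show ?thesis using Suc.IH[OF ab Suc.prems(2)] by auto
    next
      case False
      then have "c = walk_of x s (Suc b)" using walk_step[of x s b] Suc.prems(3) by auto
      then show ?thesis using Suc.prems by auto
    qed
  qed
qed

lemma convex_ineq:
  fixes r K Y :: real
  assumes "0 < r" "r < 1" "0 \<le> Y" "Y \<le> K" "0 < K"
  shows "r powr (K - Y) * (1 - r powr Y) \<le> Y / K * (1 - r powr K)"
proof -
  define l where "l = - ln r"
  have l0: "0 \<le> l" using assms by (simp add: l_def)
  define \<theta> where "\<theta> = Y / K"
  have th: "0 \<le> \<theta>" "\<theta> \<le> 1" using assms by (auto simp: \<theta>_def)
  have cv: "convex_on UNIV (\<lambda>x. exp (l * x))" by (rule convex_on_exp[OF l0])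
  have "exp (l * ((1 - \<theta>) *\<^sub>R 0 + \<theta> *\<^sub>R K)) \<le> (1 - \<theta>) * exp (l * 0) + \<theta> * exp (l * K)"
    by (rule convex_onD[OF cv]) (use th in auto)
  then have c: "exp (l * Y) \<le> (1 - \<theta>) + \<theta> * exp (l * K)"
    using assms by (simp add: \<theta>_def)
  have rp: "r powr z = exp (- l * z)" for z using assms by (simp add: powr_def l_def)
  have "r powr (K - Y) = exp (- l * K) * exp (l * Y)"
    unfolding rp by (simp add: exp_add[symmetric] algebra_simps)
  also have "\<dots> \<le> exp (- l * K) * ((1 - \<theta>) + \<theta> * exp (l * K))"
    using c by (intro mult_left_mono) auto
  also have "\<dots> = (1 - \<theta>) * r powr K + \<theta>"
    unfolding rp by (simp add: algebra_simps exp_add[symmetric])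
  finally have "r powr (K - Y) \<le> (1 - \<theta>) * r powr K + \<theta>" .
  moreover have "r powr (K - Y) * r powr Y = r powr K" by (simp add: powr_add[symmetric])
  ultimately show ?thesis by (simp add: \<theta>_def algebra_simps)
qed




lemma bad_incl:
  fixes N L :: nat and \<epsilon> :: real
  assumes N2: "2 \<le> N" and eps: "0 < \<epsilon>" and Ne: "2 < real N powr \<epsilon>" and LN: "N < L"
  shows "walk_of 1 -` ({w. \<epsilon> < \<bar>max_dev N w\<bar>} \<inter> never_returns0) \<subseteq>
    {s. \<forall>i. 0 < walk_of 1 s i \<and> walk_of 1 s i < int L} \<union>
    (\<Union>j\<in>{..nat \<lfloor>log 2 (real N)\<rfloor>}. \<Union>n. {s. hitseq n 1 [2^j, int (nat \<lfloor>2^(j+1) / real N powr \<epsilon>\<rfloor>), int L] s})"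
proof
  fix s assume s: "s \<in> walk_of 1 -` ({w. \<epsilon> < \<bar>max_dev N w\<bar>} \<inter> never_returns0)"
  define w where "w = walk_of 1 s"
  have md: "\<epsilon> < \<bar>max_dev N w\<bar>" using s by (simp add: w_def)
  have nr: "\<forall>n\<ge>1. w n \<noteq> 0" using s by (simp add: w_def never_returns0_def)
  have pos: "1 \<le> w n" for n
  proof (rule ccontr)
    assume "\<not> 1 \<le> w n"
    then have "w n \<le> 0" by simp
    then obtain m where "m \<le> n" "w m = 0" using ivt_down[of 0 n 0 1 s] by (auto simp: w_def)
    moreover have "m \<noteq> 0"
    proof
      assume "m = 0" then show False using \<open>w m = 0\<close> by (simp add: w_def)
    qed
    ultimately show False using nr by auto
  qed
  show "s \<in> {s. \<forall>i. 0 < walk_of 1 s i \<and> walk_of 1 s i < int L} \<union>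
    (\<Union>j\<in>{..nat \<lfloor>log 2 (real N)\<rfloor>}. \<Union>n. {s. hitseq n 1 [2^j, int (nat \<lfloor>2^(j+1) / real N powr \<epsilon>\<rfloor>), int L] s})"
  proof (cases "\<forall>i. 0 < w i \<and> w i < int L")
    case True
    then show ?thesis by (simp add: w_def)
  next
    case False
    then obtain i0 where i0: "int L \<le> w i0" using pos by (meson not_le order.strict_trans1 zero_less_one)
    have hit: "\<exists>n. w n = c" if "1 \<le> c" "c \<le> int L" for c
      using ivt_up[of 0 i0 1 s c] that i0 by (auto simp: w_def)
    define T where "T k = (LEAST n. w n = int k)" for k :: nat
    have Tp: "w (T k) = int k" "\<And>m. w m = int k \<Longrightarrow> T k \<le> m" "tau k w = enat (T k)"
      if kk: "1 \<le> k" "k \<le> L" for k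
    proof -
      obtain n where n: "w n = int k" using hit[of "int k"] kk by auto
      show "w (T k) = int k" unfolding T_def by (rule LeastI[of _ n]) (rule n)
      show "T k \<le> m" if "w m = int k" for m unfolding T_def by (rule Least_le) (rule that)
      show "tau k w = enat (T k)" unfolding tau_def T_def using n by auto
    qed
    have Tlt: "T k < T (Suc k)" if "1 \<le> k" "Suc k \<le> L" for k
    proof -
      have "w 0 \<le> int k" "int k \<le> w (T (Suc k))" using Tp[of "Suc k"] that by (auto simp: w_def)
      then obtain m where m: "m \<le> T (Suc k)" "w m = int k" using ivt_up[of 0 "T (Suc k)" 1 s "int k"] by (auto simp: w_def)
      have "m \<noteq> T (Suc k)" using m Tp[of "Suc k"] that by auto
      moreover have "T k \<le> m" using Tp(2)[of k m] m that by auto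
      ultimately show ?thesis using m by auto
    qed
    define f where "f k n = log (real N) (real k) - log (real N) (real_of_int (w n))" for k n :: nat
    define D where "D k = {n. tau k w \<le> enat n \<and> enat n < tau (Suc k) w}" for k :: nat
    have Deq: "D k = {T k..<T (Suc k)}" if "k \<in> {1..N}" for k
      using that Tp[of k] Tp[of "Suc k"] LN by (auto simp: D_def)
    have Dfin: "finite (f k ` D k)" "f k ` D k \<noteq> {}" "0 \<le> Max (f k ` D k)" if "k \<in> {1..N}" for k
    proof -
      show "finite (f k ` D k)" using Deq[OF that] by simp
      have "T k \<in> D k" using Deq[OF that] Tlt[of k] that LN by auto
      moreover have "f k (T k) = 0" using Tp[of k] that LN by (simp add: f_def)
      ultimately show "f k ` D k \<noteq> {}" "0 \<le> Max (f k ` D k)"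
        using \<open>finite (f k ` D k)\<close> by (auto intro!: Max_ge_iff[THEN iffD2] bexI[of _ "T k"])
    qed
    have mdeq: "max_dev N w = Max ((\<lambda>k. Max (f k ` D k)) ` {1..N})"
      by (simp add: max_dev_def f_def D_def)
    have "0 \<le> max_dev N w" unfolding mdeq using Dfin[of 1] N2
      by (intro Max_ge_iff[THEN iffD2]) (auto intro!: bexI[of _ 1])
    then have "\<epsilon> < Max ((\<lambda>k. Max (f k ` D k)) ` {1..N})" using md mdeq by simp
    then obtain k where k: "k \<in> {1..N}" "\<epsilon> < Max (f k ` D k)" using N2 by (subst (asm) Max_gr_iff) auto
    then obtain n where n: "n \<in> D k" "\<epsilon> < f k n" using Dfin[OF k(1)] by (auto simp: Max_gr_iff)
    have nT: "T k \<le> n" "n < T (Suc k)" using n(1) Deq[OF k(1)] by auto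
    define v where "v = w n"
    have v1: "1 \<le> v" using pos by (simp add: v_def)
    have "\<epsilon> < (ln (real k) - ln (real_of_int v)) / ln (real N)"
      using n(2) by (simp add: f_def v_def log_def diff_divide_distrib)
    then have "\<epsilon> * ln (real N) < ln (real k) - ln (real_of_int v)"
      using N2 by (simp add: pos_less_divide_eq)
    then have "ln (real N powr \<epsilon>) < ln (real k / real_of_int v)"
      using N2 v1 k by (simp add: ln_powr ln_div mult.commute)
    then have kv: "real N powr \<epsilon> < real k / real_of_int v"
      using N2 v1 k by (subst (asm) ln_less_cancel_iff) auto
    have vk: "real_of_int v < real k / real N powr \<epsilon>"
    proof -
      note a = kv
      have "0 < real N powr \<epsilon>" using N2 by simp
      moreover have "real_of_int v * real N powr \<epsilon> < real k" using a v1 by (simp add: field_simps)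
      ultimately show ?thesis by (simp add: pos_less_divide_eq)
    qed
    obtain j where j: "2^j \<le> k" "k < 2^(j+1)" using ex_power_ivl1[of 2 k] k by auto
    define Y where "Y = nat \<lfloor>2^(j+1) / real N powr \<epsilon>\<rfloor>"
    have jJ: "j \<in> {..nat \<lfloor>log 2 (real N)\<rfloor>}"
    proof -
      have "(2::real)^j \<le> real N" using j k by (metis atLeastAtMost_iff of_nat_le_iff of_nat_numeral of_nat_power order.trans)
      then have "log 2 ((2::real)^j) \<le> log 2 (real N)" using N2 by (subst log_le_cancel_iff) auto
      then have "real j \<le> log 2 (real N)" by (simp add: log_nat_power)
      then have "int j \<le> \<lfloor>log 2 (real N)\<rfloor>" by (simp add: le_floor_iff)
      then show ?thesis by simp
    qed
    have Npos: "0 < real N powr \<epsilon>" using N2 by simp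
    have "real k < real (2^(j+1))" using j(2) by (simp only: of_nat_less_iff)
    then have kj: "real k < 2^(j+1)" by simp
    have "real k / real N powr \<epsilon> < 2^(j+1) / real N powr \<epsilon>"
      by (rule divide_strict_right_mono[OF kj Npos])
    then have "real_of_int v \<le> 2^(j+1) / real N powr \<epsilon>" using vk by simp
    then have vY: "v \<le> int Y" unfolding Y_def using v1 by (simp add: le_floor_iff)
    have x0: "0 \<le> (2::real)^(j+1) / real N powr \<epsilon>" using Npos by simp
    then have "0 \<le> \<lfloor>(2::real)^(j+1) / real N powr \<epsilon>\<rfloor>" by simp
    then have "real Y = real_of_int \<lfloor>(2::real)^(j+1) / real N powr \<epsilon>\<rfloor>" unfolding Y_def by simp
    also have "\<dots> \<le> 2^(j+1) / real N powr \<epsilon>" by (rule of_int_floor_le)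
    finally have "real Y \<le> 2^(j+1) / real N powr \<epsilon>" .
    also have "\<dots> < 2^(j+1) / 2" using Ne N2 by (intro divide_strict_left_mono) auto
    also have "\<dots> = 2^j" by simp
    finally have "real Y < 2^j" .
    then have "real Y < real (2^j)" by simp
    then have "Y < 2^j" by (simp only: of_nat_less_iff)
    then have YK: "int Y < 2^j" by (metis of_nat_less_iff of_nat_numeral of_nat_power)
    obtain n1 where n1: "n1 \<le> T k" "w n1 = 2^j"
    proof -
      have "int (2^j) \<le> int k" using j(1) by (simp only: of_nat_le_iff)
      then have a: "2^j \<le> int k" by simp
      have b: "1 \<le> (2::int)^j" by simp
      have "w (T k) = int k" using Tp[of k] k LN by auto
      then obtain m where "m \<le> T k" "w m = 2^j" using ivt_up[of 0 "T k" 1 s "2^j"] a b by (auto simp: w_def)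
      then show ?thesis using that by blast
    qed
    obtain n2 where n2: "n1 \<le> n2" "n2 \<le> n" "w n2 = int Y"
      using ivt_down[of n1 n "int Y" 1 s] n1 nT vY YK by (auto simp: w_def v_def)
    have ni0: "n < i0"
    proof (rule ccontr)
      assume "\<not> n < i0"
      then have "i0 \<le> n" by simp
      obtain m where "m \<le> i0" "w m = int (Suc k)"
        using ivt_up[of 0 i0 1 s "int (Suc k)"] i0 k LN by (auto simp: w_def)
      then have "T (Suc k) \<le> m" using Tp(2)[of "Suc k" m] k LN by auto
      then show False using nT \<open>m \<le> i0\<close> \<open>i0 \<le> n\<close> by auto
    qed
    obtain n3 where n3: "n \<le> n3" "n3 \<le> i0" "w n3 = int L"
      using ivt_up[of n i0 1 s "int L"] ni0 i0 vY YK j k LN by (auto simp: w_def v_def)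
    have "hitseq n3 1 [2^j, int Y, int L] s"
    proof (rule hitseq_complete[where ns="[n1, n2, n3]"])
      show "list_all2 (\<lambda>m t. m \<le> n3 \<and> walk_of 1 s m = t) [n1, n2, n3] [2 ^ j, int Y, int L]"
        using n1 n2 n3 by (simp add: w_def)
      show "sorted [n1, n2, n3]" using n2 n3 by simp
      show "\<forall>i. (\<exists>m\<in>set [n1, n2, n3]. i < m) \<longrightarrow> walk_of 1 s i \<noteq> 0"
        using pos by (auto simp: w_def) (metis not_one_le_zero)+
    qed
    then have "s \<in> (\<Union>n. {s. hitseq n 1 [2^j, int Y, int L] s})" by blast
    then show ?thesis using jJ unfolding Y_def by blast
  qed
qed




lemma emeasure_to_measure:
  assumes "emeasure (SS p) A \<le> ennreal c" "0 \<le> c"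
  shows "measure (SS p) A \<le> c"
proof -
  interpret prob_space "SS p" by (rule prob_SS)
  show ?thesis using assms by (simp add: emeasure_eq_measure)
qed

lemma hitseq_UN_sets: "(\<Union>n. {s. hitseq n x ts s}) \<in> sets (SS p)"
  using hitseq_sets by (intro sets.countable_UN) auto

lemma hit_one:
  assumes p: "1/2 < p" "p < 1" and t: "0 \<le> t" and x: "0 \<le> x"
  shows "emeasure (SS p) {s. hitseq n x [t] s} \<le> ennreal (uu p t x)"
  using hit_bound[OF p t zero_le_one hit_nil] x by simp

lemma denom_bound:
  assumes p: "1/2 < p" "p < 1"
  shows "1 - rr p \<le> measure (walk_law p 1) never_returns0"
proof -
  interpret prob_space "SS p" by (rule prob_SS)
  define G where "G = {s. \<forall>n\<ge>1. walk_of 1 s n \<noteq> 0}"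
  have Gs: "G \<in> sets (SS p)"
  proof -
    have "{s \<in> space (SS p). \<forall>n. 1 \<le> n \<longrightarrow> walk_of 1 s n \<noteq> 0} \<in> sets (SS p)" by measurable
    then show ?thesis by (simp add: G_def)
  qed
  have sub: "UNIV - G \<subseteq> (\<Union>n. {s. hitseq n 1 [0] s})"
  proof
    fix s assume "s \<in> UNIV - G"
    then obtain m0 where "walk_of 1 s m0 = 0" by (auto simp: G_def)
    define m where "m = (LEAST m. walk_of 1 s m = 0)"
    have m: "walk_of 1 s m = 0" unfolding m_def by (rule LeastI) fact
    have lt: "walk_of 1 s i \<noteq> 0" if "i < m" for i
      using not_less_Least[of i "\<lambda>m. walk_of 1 s m = 0"] that by (simp add: m_def)
    have "hitseq m 1 [0] s"
      by (rule hitseq_complete[where ns="[m]"]) (use m lt in auto)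
    then show "s \<in> (\<Union>n. {s. hitseq n 1 [0] s})" by blast
  qed
  have r: "0 < rr p" using rr_pos[OF p] by simp
  have "emeasure (SS p) (\<Union>n. {s. hitseq n 1 [0] s}) \<le> ennreal (rr p)"
  proof (rule hitseq_UN_bound)
    fix n
    show "emeasure (SS p) {s. hitseq n 1 [0] s} \<le> ennreal (rr p)"
      using hit_one[OF p, of 0 1 n] r by (simp add: uu_def)
  qed
  then have "measure (SS p) (\<Union>n. {s. hitseq n 1 [0] s}) \<le> rr p"
    using r by (intro emeasure_to_measure) auto
  moreover have "measure (SS p) (UNIV - G) \<le> measure (SS p) (\<Union>n. {s. hitseq n 1 [0] s})"
  proof (rule finite_measure_mono[OF sub])
    show "(\<Union>n. {s. hitseq n 1 [0] s}) \<in> sets (SS p)"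
      by (rule hitseq_UN_sets)
  qed
  moreover have "measure (SS p) (UNIV - G) = 1 - measure (SS p) G"
    using prob_compl[OF Gs] by simp
  ultimately have "1 - rr p \<le> measure (SS p) G" by simp
  then show ?thesis by (simp add: walk_law_never G_def)
qed

lemma rho_lt1: "1/2 < p \<Longrightarrow> p < 1 \<Longrightarrow> rho p < 1"
proof -
  assume p: "1/2 < p" "p < 1"
  have "0 < (2*p - 1)^2" using p by simp
  then have "p * (1 - p) < (1/2)^2" by (simp add: power2_eq_square algebra_simps)
  then have "sqrt (p * (1 - p)) < sqrt ((1/2)^2)" by (simp only: real_sqrt_less_iff)
  then have "sqrt (p * (1 - p)) < 1/2" by simp
  then show ?thesis by (simp add: rho_def)
qed

lemma Z_null:
  assumes p: "1/2 < p" "p < 1"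
  shows "measure (SS p) {s. \<forall>i. 0 < walk_of 1 s i \<and> walk_of 1 s i < L} = 0"
proof -
  interpret prob_space "SS p" by (rule prob_SS)
  define Z where "Z = {s. \<forall>i. 0 < walk_of 1 s i \<and> walk_of 1 s i < L}"
  define c where "c = sg p powr (real_of_int (1 - L))"
  have c0: "0 \<le> c" by (simp add: c_def)
  have le: "measure (SS p) Z \<le> c * rho p ^ m" for m
  proof -
    have "emeasure (SS p) (stayset L m 1) \<le> ennreal (c * rho p ^ m)"
      using stay_bound[OF p, of L m 1] by (simp add: c_def)
    then have "measure (SS p) (stayset L m 1) \<le> c * rho p ^ m"
      using c0 rho_nonneg[OF p] by (intro emeasure_to_measure) auto
    moreover have "measure (SS p) Z \<le> measure (SS p) (stayset L m 1)"
      using stayset_meas by (intro finite_measure_mono) (auto simp: Z_def stayset_def)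
    ultimately show ?thesis by simp
  qed
  have "(\<lambda>m. c * rho p ^ m) \<longlonglongrightarrow> c * 0"
    using rho_nonneg[OF p] rho_lt1[OF p] by (intro tendsto_mult tendsto_const LIMSEQ_power_zero) auto
  then have "measure (SS p) Z \<le> 0" using le by (intro LIMSEQ_le_const[where a="measure (SS p) Z"]) auto
  then show ?thesis by (simp add: Z_def measure_nonneg order.antisym)
qed

lemma E_bound:
  assumes p: "1/2 < p" "p < 1" and K: "1 \<le> K" and Y: "0 \<le> Y" "Y < K" and L: "K < L"
  shows "measure (SS p) (\<Union>n. {s. hitseq n 1 [K, Y, L] s}) \<le> hh p 1 * (real_of_int Y / real_of_int K) / hh p (real_of_int L)"
proof -
  have r: "0 < rr p" "rr p < 1" using rr_pos[OF p] by auto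
  have hK: "0 < hh p (real_of_int K)" using hh_pos[OF p] K by simp
  have hL: "0 < hh p (real_of_int L)" using hh_pos[OF p] K L by simp
  have h1: "0 < hh p 1" using hh_pos[OF p] by simp
  define c1 where "c1 = uu p L Y"
  define c2 where "c2 = uu p Y K * c1"
  define c3 where "c3 = uu p K 1 * c2"
  have c1v: "c1 = hh p (real_of_int Y) / hh p (real_of_int L)" using Y L by (simp add: c1_def uu_def)
  have c2v: "c2 = rr p powr (real_of_int (K - Y)) * c1" using Y by (simp add: c2_def uu_def)
  have uK: "uu p K 1 = hh p 1 / hh p (real_of_int K)" using hK K by (auto simp: uu_def)
  have hY: "0 \<le> hh p (real_of_int Y)" using hh_pos[OF p, of "real_of_int Y"] Y
    by (cases "Y = 0") (auto simp: hh_0[OF p])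
  have c10: "0 \<le> c1" using hY hL by (simp add: c1v)
  have c20: "0 \<le> c2" using c10 by (simp add: c2v)
  have c30: "0 \<le> c3" using c20 h1 hK by (simp add: c3_def uK)
  have b1: "emeasure (SS p) {s. hitseq n Y [L] s} \<le> ennreal c1" for n
    unfolding c1_def using hit_one[OF p, of L Y n] Y L by simp
  have b2: "emeasure (SS p) {s. hitseq n K [Y, L] s} \<le> ennreal c2" for n
    unfolding c2_def using hit_bound[OF p Y(1) c10 b1, of K n] K by simp
  have b3: "emeasure (SS p) {s. hitseq n 1 [K, Y, L] s} \<le> ennreal c3" for n
    unfolding c3_def using hit_bound[OF p _ c20 b2, of 1 n] K by simp
  have "measure (SS p) (\<Union>n. {s. hitseq n 1 [K, Y, L] s}) \<le> c3"
  proof (rule emeasure_to_measure[OF _ c30])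
    show "emeasure (SS p) (\<Union>n. {s. hitseq n 1 [K, Y, L] s}) \<le> ennreal c3"
      by (rule hitseq_UN_bound) (rule b3)
  qed
  also have "c3 = hh p 1 / hh p (real_of_int K) * (rr p powr (real_of_int K - real_of_int Y) * hh p (real_of_int Y)) / hh p (real_of_int L)"
    by (simp add: c3_def uK c2v c1v)
  also have "\<dots> \<le> hh p 1 / hh p (real_of_int K) * (real_of_int Y / real_of_int K * hh p (real_of_int K)) / hh p (real_of_int L)"
  proof -
    have "rr p powr (real_of_int K - real_of_int Y) * hh p (real_of_int Y) \<le> real_of_int Y / real_of_int K * hh p (real_of_int K)"
      unfolding hh_def using convex_ineq[OF r, of "real_of_int Y" "real_of_int K"] Y K by simp
    then show ?thesis using h1 hK hL by (intro divide_right_mono mult_left_mono) auto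
  qed
  also have "\<dots> = hh p 1 * (real_of_int Y / real_of_int K) / hh p (real_of_int L)"
    using hK by simp
  finally show ?thesis .
qed




lemma main_bound:
  fixes N :: nat and \<epsilon> p :: real
  assumes p: "1/2 < p" "p < 1" and N2: "2 \<le> N" and eps: "0 < \<epsilon>" and Ne: "2 < real N powr \<epsilon>"
  shows "cond_walk_prob p 1 {w. \<epsilon> < \<bar>max_dev N w\<bar>} \<le> 4 * (real (nat \<lfloor>log 2 (real N)\<rfloor>) + 1) / real N powr \<epsilon>"
proof -
  interpret prob_space "SS p" by (rule prob_SS)
  define J where "J = nat \<lfloor>log 2 (real N)\<rfloor>"
  define Y where "Y j = nat \<lfloor>2^(j+1) / real N powr \<epsilon>\<rfloor>" for j :: nat
  have r: "0 < rr p" "rr p < 1" using rr_pos[OF p] by auto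
  obtain n0 where n0: "rr p ^ n0 < 1/2" using real_arch_pow_inv[of "1/2" "rr p"] r by auto
  define L where "L = max n0 (N + 1)"
  have LN: "N < L" by (simp add: L_def)
  have pl: "rr p ^ L \<le> rr p ^ n0" using r by (intro power_decreasing) (auto simp: L_def)
  have "rr p powr real L = rr p ^ L" using r(1) by (rule powr_realpow)
  then have hL: "1/2 \<le> hh p (real_of_int (int L))"
  proof -
    assume e: "rr p powr real L = rr p ^ L"
    have "rr p ^ L < 1/2" using pl n0 by linarith
    moreover have "hh p (real_of_int (int L)) = 1 - rr p ^ L"
      unfolding hh_def of_int_of_nat_eq e by (rule refl)
    ultimately show ?thesis by simp
  qed
  have h1: "hh p 1 = 1 - rr p" using r by (simp add: hh_def powr_one)
  have h1p: "0 < hh p 1" using hh_pos[OF p] by simp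
  have Npos: "0 < real N powr \<epsilon>" using N2 by simp
  define Z where "Z = {s. \<forall>i. 0 < walk_of 1 s i \<and> walk_of 1 s i < int L}"
  define H where "H j = (\<Union>n. {s. hitseq n 1 [2^j, int (Y j), int L] s})" for j :: nat
  have Zs: "Z \<in> sets (SS p)"
  proof -
    have "{s \<in> space (SS p). \<forall>i. 0 < walk_of 1 s i \<and> walk_of 1 s i < int L} \<in> sets (SS p)" by measurable
    then show ?thesis by (simp add: Z_def)
  qed
  have Hs: "H j \<in> sets (SS p)" for j unfolding H_def by (rule hitseq_UN_sets)
  have incl: "walk_of 1 -` ({w. \<epsilon> < \<bar>max_dev N w\<bar>} \<inter> never_returns0) \<subseteq> Z \<union> (\<Union>j\<in>{..J}. H j)"
    unfolding Z_def H_def Y_def J_def by (rule bad_incl[OF N2 eps Ne LN])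
  have Cs: "Z \<union> (\<Union>j\<in>{..J}. H j) \<in> sets (SS p)" using Zs Hs by auto
  have Hb: "measure (SS p) (H j) \<le> 4 * hh p 1 / real N powr \<epsilon>" if j: "j \<in> {..J}" for j
  proof -
    have lg: "0 \<le> log 2 (real N)" using N2 by simp
    then have "0 \<le> \<lfloor>log 2 (real N)\<rfloor>" by simp
    then have "int j \<le> \<lfloor>log 2 (real N)\<rfloor>" using j unfolding J_def by (simp add: le_nat_iff)
    then have "real j \<le> log 2 (real N)" by (simp only: le_floor_iff of_int_of_nat_eq)
    then have "2 powr real j \<le> 2 powr log 2 (real N)" by (intro powr_mono) auto
    then have "(2::real)^j \<le> real N" using N2 by (simp add: powr_realpow)
    then have "real (2^j) \<le> real N" by simp
    then have "2^j \<le> N" by (simp only: of_nat_le_iff)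
    then have "2^j < L" using LN by simp
    then have "int (2^j) < int L" by (simp only: of_nat_less_iff)
    then have KN: "(2::int)^j < int L" by simp
    have x0: "0 \<le> (2::real)^(j+1) / real N powr \<epsilon>" using Npos by simp
    then have "0 \<le> \<lfloor>(2::real)^(j+1) / real N powr \<epsilon>\<rfloor>" by simp
    then have "real (Y j) = real_of_int \<lfloor>(2::real)^(j+1) / real N powr \<epsilon>\<rfloor>" unfolding Y_def by simp
    also have "\<dots> \<le> 2^(j+1) / real N powr \<epsilon>" by (rule of_int_floor_le)
    finally have Yle: "real (Y j) \<le> 2^(j+1) / real N powr \<epsilon>" .
    also have "\<dots> < 2^(j+1) / 2" using Ne N2 by (intro divide_strict_left_mono) auto
    also have "\<dots> = 2^j" by simp
    finally have "real (Y j) < 2^j" .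
    then have "real (Y j) < real (2^j)" by simp
    then have "Y j < 2^j" by (simp only: of_nat_less_iff)
    then have "int (Y j) < int (2^j)" by (simp only: of_nat_less_iff)
    then have YK: "int (Y j) < 2^j" by simp
    have "measure (SS p) (H j) \<le> hh p 1 * (real_of_int (int (Y j)) / real_of_int ((2::int)^j)) / hh p (real_of_int (int L))"
      unfolding H_def by (rule E_bound[OF p _ _ YK KN]) auto
    also have "\<dots> \<le> hh p 1 * (2 / real N powr \<epsilon>) / (1/2)"
    proof -
      have "real (Y j) / 2^j \<le> (2^(j+1) / real N powr \<epsilon>) / 2^j" using Yle by (intro divide_right_mono) auto
      also have "\<dots> = 2 / real N powr \<epsilon>" by simp
      finally have rt: "real_of_int (int (Y j)) / real_of_int ((2::int)^j) \<le> 2 / real N powr \<epsilon>" by simp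
      have "hh p 1 * (real_of_int (int (Y j)) / real_of_int ((2::int)^j)) \<le> hh p 1 * (2 / real N powr \<epsilon>)"
        using rt h1p by (intro mult_left_mono) auto
      then show ?thesis using hL h1p Npos by (intro divide_mono) auto
    qed
    also have "\<dots> = 4 * hh p 1 / real N powr \<epsilon>" by simp
    finally show ?thesis .
  qed
  have "measure (walk_law p 1) ({w. \<epsilon> < \<bar>max_dev N w\<bar>} \<inter> never_returns0) \<le> measure (SS p) (Z \<union> (\<Union>j\<in>{..J}. H j))"
    by (rule walk_law_le[OF incl Cs])
  also have "\<dots> \<le> measure (SS p) Z + measure (SS p) (\<Union>j\<in>{..J}. H j)"
    using Zs Hs by (intro measure_Un_le) auto
  also have "measure (SS p) Z = 0" unfolding Z_def by (rule Z_null[OF p])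
  also have "measure (SS p) (\<Union>j\<in>{..J}. H j) \<le> (\<Sum>j\<in>{..J}. measure (SS p) (H j))"
    using Hs by (intro finite_measure_subadditive_finite) auto
  also have "\<dots> \<le> (\<Sum>j\<in>{..J}. 4 * hh p 1 / real N powr \<epsilon>)"
    by (intro sum_mono Hb)
  also have "\<dots> = (real J + 1) * (4 * hh p 1 / real N powr \<epsilon>)" by simp
  finally have num: "measure (walk_law p 1) ({w. \<epsilon> < \<bar>max_dev N w\<bar>} \<inter> never_returns0) \<le> (real J + 1) * (4 * hh p 1 / real N powr \<epsilon>)"
    by simp
  have den: "hh p 1 \<le> measure (walk_law p 1) never_returns0" using denom_bound[OF p] h1 by simp
  have "cond_walk_prob p 1 {w. \<epsilon> < \<bar>max_dev N w\<bar>} \<le> measure (walk_law p 1) ({w. \<epsilon> < \<bar>max_dev N w\<bar>} \<inter> never_returns0) / hh p 1"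
    unfolding cond_walk_prob_def using den h1p by (intro divide_left_mono) (auto intro: measure_nonneg mult_pos_pos)
  also have "\<dots> \<le> (real J + 1) * (4 * hh p 1 / real N powr \<epsilon>) / hh p 1"
    using num h1p by (intro divide_right_mono) auto
  also have "\<dots> = 4 * (real J + 1) / real N powr \<epsilon>" using h1p by simp
  finally show ?thesis by (simp add: J_def)
qed


theorem lemma4p5:
  fixes a :: real and \<phi> :: "nat \<Rightarrow> real"
  assumes "a > 0"
    and "\<And>N. 0 < \<phi> N \<and> \<phi> N \<le> 1"
  shows "\<forall>\<epsilon>>0. (\<lambda>N. cond_walk_prob ((1 + a * \<phi> N) / (2 + a * \<phi> N)) 1
                 {w. \<bar>max_dev N w\<bar> > \<epsilon>}) \<longlonglongrightarrow> 0"
proof (intro allI impI)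
  fix \<epsilon> :: real assume eps: "\<epsilon> > 0"
  have p: "1/2 < (1 + a * \<phi> N) / (2 + a * \<phi> N)" "(1 + a * \<phi> N) / (2 + a * \<phi> N) < 1" for N
  proof -
    have "0 < a * \<phi> N" using assms(1) assms(2)[of N] by simp
    then show "1/2 < (1 + a * \<phi> N) / (2 + a * \<phi> N)" "(1 + a * \<phi> N) / (2 + a * \<phi> N) < 1"
      by (simp_all add: field_simps)
  qed
  have ev: "eventually (\<lambda>N::nat. 2 < real N powr \<epsilon>) sequentially"
    using eps by real_asymp
  have lim: "(\<lambda>N::nat. 4 * (log 2 (real N) + 1) / real N powr \<epsilon>) \<longlonglongrightarrow> 0"
    using eps by real_asymp
  show "(\<lambda>N. cond_walk_prob ((1 + a * \<phi> N) / (2 + a * \<phi> N)) 1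
                 {w. \<bar>max_dev N w\<bar> > \<epsilon>}) \<longlonglongrightarrow> 0"
  proof (rule tendsto_sandwich[OF _ _ tendsto_const lim])
    show "\<forall>\<^sub>F N in sequentially. 0 \<le> cond_walk_prob ((1 + a * \<phi> N) / (2 + a * \<phi> N)) 1 {w. \<bar>max_dev N w\<bar> > \<epsilon>}"
      by (intro always_eventually allI) (simp add: cond_walk_prob_def measure_nonneg)
    have "\<forall>\<^sub>F N in sequentially. 2 \<le> N \<and> 2 < real N powr \<epsilon>"
      using ev eventually_ge_at_top[of 2] by eventually_elim auto
    then show "\<forall>\<^sub>F N in sequentially. cond_walk_prob ((1 + a * \<phi> N) / (2 + a * \<phi> N)) 1 {w. \<bar>max_dev N w\<bar> > \<epsilon>}
        \<le> 4 * (log 2 (real N) + 1) / real N powr \<epsilon>"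
    proof eventually_elim
      case (elim N)
      have "cond_walk_prob ((1 + a * \<phi> N) / (2 + a * \<phi> N)) 1 {w. \<epsilon> < \<bar>max_dev N w\<bar>}
          \<le> 4 * (real (nat \<lfloor>log 2 (real N)\<rfloor>) + 1) / real N powr \<epsilon>"
        using elim by (intro main_bound[OF p _ eps]) auto
      also have "\<dots> \<le> 4 * (log 2 (real N) + 1) / real N powr \<epsilon>"
      proof -
        have lg: "0 \<le> log 2 (real N)" using elim by simp
        then have "real (nat \<lfloor>log 2 (real N)\<rfloor>) \<le> log 2 (real N)" by linarith
        then show ?thesis using elim by (intro divide_right_mono) auto
      qed
      finally show ?case by simp
    qed
  qed
qed

end
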